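(* Let $X$ be a compact metric space, $f:X\dashrightarrow X$ a continuous open-dense defined map and $0\ne\mu_0\in SM^+(X)$. 1) If $\mu$ is a weak cluster point of the Cesàro averages $\mu_n=\frac1n\sum_{j=0}^n(f_* )^j(\mu_0)$, then $f_*(\mu)\ge\mu$. 2) If $f_*(\mu_0)\le\mu_0$, then $(f_* )^n(\mu_0)$ converges weakly to some $\mu_\infty\in SM^+(X)$, and $\mu_\infty$ is the largest element of the (non-empty) set $\{\mu\in SM^+(X):\mu\le\mu_0,\ f_*(\mu)=\mu\}$. 3) If $f_*(\mu_0)\ge\mu_0$, then the set $\{\mu\in SM^+(X):\mu\ge\mu_0,\ f_*(\mu)=\mu\}$ is non-empty and has a smallest element.
   Context: Positive strong submeasure on $X$: a map $\mu:C^0(X)\to\mathbb{R}$ that is sub-linear ($\mu(\varphi_1+\varphi_2)\le\mu(\varphi_1)+\mu(\varphi_2)$, $\mu(\lambda\varphi)=\lambda\mu(\varphi)$ for $\lambda\ge0$), bounded ($|\mu(\varphi)|\le C\|\varphi\|_{L^\infty}$) and non-decreasing; $SM^+(X)$ is the set of these. $\mu\le\nu$ means $\mu(\varphi)\le\nu(\varphi)$ for all $\varphi$. Weak convergence: uniformly bounded norms and pointwise convergence on $C^0(X)$. A continuous open-dense defined map $f:X\dashrightarrow X$ is a continuous map $f:\mathrm{OpenDom}(f)\to X$ with $\mathrm{OpenDom}(f)$ open dense in $X$. For $\varphi\in C^0(X)$, $f^*(\varphi):=E(\varphi\circ f)$ where for bounded $g$ on an open dense $U$, $E(g)=g$ on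 $U$ and $E(g)(x)=\limsup_{y\in U,y\to x}g(y)$ off $U$. Pushforward: $f_*(\mu)(\varphi):=\inf\{\mu(\psi):\psi\in C^0(X),\ \psi\ge f^*(\varphi)\}$; $(f_* )^j$ denotes the $j$-fold iterate of the operator $f_*$. *)

theory Defs
  imports "HOL-Analysis.Analysis"
begin

text \<open>Continuous real functions on the compact set X, normalised to be 0 outside X
  (so that each element of C^0(X) has exactly one representative).\<close>
definition C0 :: "'a::metric_space set \<Rightarrow> ('a \<Rightarrow> real) set" where
  "C0 X = {\<phi>. continuous_on X \<phi> \<and> (\<forall>x. x \<notin> X \<longrightarrow> \<phi> x = 0)}"

definition supnorm :: "'a set \<Rightarrow> ('a \<Rightarrow> real) \<Rightarrow> real" where
  "supnorm X \<phi> = (SUP x\<in>X. \<bar>\<phi> x\<bar>)"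

definition SMp :: "'a::metric_space set \<Rightarrow> (('a \<Rightarrow> real) \<Rightarrow> real) set" where
  "SMp X = {\<mu>.
     (\<forall>\<phi>1\<in>C0 X. \<forall>\<phi>2\<in>C0 X. \<mu> (\<lambda>x. \<phi>1 x + \<phi>2 x) \<le> \<mu> \<phi>1 + \<mu> \<phi>2) \<and>
     (\<forall>\<phi>\<in>C0 X. \<forall>c::real. c \<ge> 0 \<longrightarrow> \<mu> (\<lambda>x. c * \<phi> x) = c * \<mu> \<phi>) \<and>
     (\<exists>C. \<forall>\<phi>\<in>C0 X. \<bar>\<mu> \<phi>\<bar> \<le> C * supnorm X \<phi>) \<and>
     (\<forall>\<phi>1\<in>C0 X. \<forall>\<phi>2\<in>C0 X. (\<forall>x\<in>X. \<phi>1 x \<le> \<phi>2 x) \<longrightarrow> \<mu> \<phi>1 \<le> \<mu> \<phi>2)}"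

definition sm_le :: "'a::metric_space set \<Rightarrow> (('a \<Rightarrow> real) \<Rightarrow> real) \<Rightarrow> (('a \<Rightarrow> real) \<Rightarrow> real) \<Rightarrow> bool" where
  "sm_le X \<mu> \<nu> \<longleftrightarrow> (\<forall>\<phi>\<in>C0 X. \<mu> \<phi> \<le> \<nu> \<phi>)"

definition sm_eq :: "'a::metric_space set \<Rightarrow> (('a \<Rightarrow> real) \<Rightarrow> real) \<Rightarrow> (('a \<Rightarrow> real) \<Rightarrow> real) \<Rightarrow> bool" where
  "sm_eq X \<mu> \<nu> \<longleftrightarrow> (\<forall>\<phi>\<in>C0 X. \<mu> \<phi> = \<nu> \<phi>)"

definition weak_conv :: "'a::metric_space set \<Rightarrow> (nat \<Rightarrow> ('a \<Rightarrow> real) \<Rightarrow> real) \<Rightarrow> (('a \<Rightarrow> real) \<Rightarrow> real) \<Rightarrow> bool" where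
  "weak_conv X \<mu>s \<mu> \<longleftrightarrow>
     (\<exists>C. \<forall>n. \<forall>\<phi>\<in>C0 X. \<bar>\<mu>s n \<phi>\<bar> \<le> C * supnorm X \<phi>) \<and>
     (\<forall>\<phi>\<in>C0 X. (\<lambda>n. \<mu>s n \<phi>) \<longlonglongrightarrow> \<mu> \<phi>)"

definition weak_cluster_point :: "'a::metric_space set \<Rightarrow> (nat \<Rightarrow> ('a \<Rightarrow> real) \<Rightarrow> real) \<Rightarrow> (('a \<Rightarrow> real) \<Rightarrow> real) \<Rightarrow> bool" where
  "weak_cluster_point X \<mu>s \<mu> \<longleftrightarrow> (\<exists>r. strict_mono r \<and> weak_conv X (\<mu>s \<circ> r) \<mu>)"

definition open_dense_map :: "'a::metric_space set \<Rightarrow> 'a set \<Rightarrow> ('a \<Rightarrow> 'a) \<Rightarrow> bool" where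
  "open_dense_map X U f \<longleftrightarrow> U \<subseteq> X \<and> openin (top_of_set X) U \<and> X \<subseteq> closure U
     \<and> continuous_on U f \<and> f ` U \<subseteq> X"

definition ext_E :: "'a::metric_space set \<Rightarrow> 'a set \<Rightarrow> ('a \<Rightarrow> real) \<Rightarrow> 'a \<Rightarrow> real" where
  "ext_E X U g x = (if x \<in> U then g x
      else if x \<in> X then real_of_ereal (Limsup (at x within U) (\<lambda>y. ereal (g y)))
      else 0)"

definition pullback :: "'a::metric_space set \<Rightarrow> 'a set \<Rightarrow> ('a \<Rightarrow> 'a) \<Rightarrow> ('a \<Rightarrow> real) \<Rightarrow> 'a \<Rightarrow> real" where
  "pullback X U f \<phi> = ext_E X U (\<lambda>y. \<phi> (f y))"

definition pushforward :: "'a::metric_space set \<Rightarrow> 'a set \<Rightarrow> ('a \<Rightarrow> 'a)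
     \<Rightarrow> (('a \<Rightarrow> real) \<Rightarrow> real) \<Rightarrow> ('a \<Rightarrow> real) \<Rightarrow> real" where
  "pushforward X U f \<mu> \<phi> =
     Inf {\<mu> \<psi> | \<psi>. \<psi> \<in> C0 X \<and> (\<forall>x\<in>X. \<psi> x \<ge> pullback X U f \<phi> x)}"

end

theory Submission imports Defs begin

definition cst :: "'a set \<Rightarrow> real \<Rightarrow> 'a \<Rightarrow> real" where
  "cst X c = (\<lambda>x. if x \<in> X then c else 0)"

definition Sset :: "'a::metric_space set \<Rightarrow> 'a set \<Rightarrow> ('a \<Rightarrow> 'a) \<Rightarrow> ('a \<Rightarrow> real) \<Rightarrow> ('a \<Rightarrow> real) set" where
  "Sset X U f \<phi> = {\<psi>\<in>C0 X. \<forall>y\<in>U. \<phi> (f y) \<le> \<psi> y}"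

lemma C0_add: "\<phi>1 \<in> C0 X \<Longrightarrow> \<phi>2 \<in> C0 X \<Longrightarrow> (\<lambda>x. \<phi>1 x + \<phi>2 x) \<in> C0 X"
  unfolding C0_def by (auto intro: continuous_intros)
lemma C0_diff: "\<phi>1 \<in> C0 X \<Longrightarrow> \<phi>2 \<in> C0 X \<Longrightarrow> (\<lambda>x. \<phi>1 x - \<phi>2 x) \<in> C0 X"
  unfolding C0_def by (auto intro: continuous_intros)
lemma C0_mult: "\<phi> \<in> C0 X \<Longrightarrow> (\<lambda>x. c * \<phi> x) \<in> C0 X"
  unfolding C0_def by (auto intro: continuous_intros)
lemma C0_cst: "cst X c \<in> C0 X"
  unfolding C0_def cst_def by (auto intro: continuous_on_eq[OF continuous_on_const])
lemma C0_zero: "(\<lambda>x. 0) \<in> C0 X"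
  unfolding C0_def by auto

locale setting =
  fixes X U :: "'a::metric_space set" and f :: "'a \<Rightarrow> 'a"
  assumes cX: "compact X" and od: "open_dense_map X U f" and ne: "X \<noteq> {}"
begin

abbreviation T where "T \<equiv> pushforward X U f"
abbreviation S where "S \<equiv> Sset X U f"
abbreviation e where "e \<equiv> cst X 1"

lemma UX: "U \<subseteq> X" and Xcl: "X \<subseteq> closure U" and fU: "\<And>y. y \<in> U \<Longrightarrow> f y \<in> X"
  using od unfolding open_dense_map_def by auto

lemma bnd:
  assumes "\<phi> \<in> C0 X"
  shows "bdd_above ((\<lambda>x. \<bar>\<phi> x\<bar>) ` X)" "bdd_above (\<phi> ` X)"
proof -
  have "compact (\<phi> ` X)" using assms cX unfolding C0_def by (auto intro: compact_continuous_image)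
  then have "bounded (\<phi> ` X)" by (rule compact_imp_bounded)
  then obtain B where B: "\<And>x. x \<in> X \<Longrightarrow> \<bar>\<phi> x\<bar> \<le> B"
    unfolding bounded_iff by auto
  show "bdd_above ((\<lambda>x. \<bar>\<phi> x\<bar>) ` X)" using B by (auto intro!: bdd_aboveI)
  show "bdd_above (\<phi> ` X)" using B by (auto intro!: bdd_aboveI[where M=B] simp: abs_le_iff)
qed

lemma le_supnorm: "\<phi> \<in> C0 X \<Longrightarrow> x \<in> X \<Longrightarrow> \<bar>\<phi> x\<bar> \<le> supnorm X \<phi>"
  unfolding supnorm_def by (rule cSUP_upper[OF _ bnd(1)])

lemma le_supnorm2: "\<phi> \<in> C0 X \<Longrightarrow> x \<in> X \<Longrightarrow> - supnorm X \<phi> \<le> \<phi> x \<and> \<phi> x \<le> supnorm X \<phi>"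
  using le_supnorm[of \<phi> x] by (metis abs_le_iff minus_le_iff)

lemma supnorm_nonneg: "\<phi> \<in> C0 X \<Longrightarrow> 0 \<le> supnorm X \<phi>"
  using ne le_supnorm by (meson abs_ge_zero all_not_in_conv order_trans)

lemma density:
  fixes \<psi> :: "'a \<Rightarrow> real"
  assumes "continuous_on X \<psi>" "\<forall>y\<in>U. a \<le> \<psi> y" "x \<in> X"
  shows "a \<le> \<psi> x"
proof (cases "x \<in> U")
  case True then show ?thesis using assms by auto
next
  case False
  have "x islimpt U" using Xcl assms(3) False unfolding closure_def by auto
  then have nb: "\<not> trivial_limit (at x within U)" using trivial_limit_within by blast
  have "(\<psi> \<longlongrightarrow> \<psi> x) (at x within X)"
    using assms(1,3) continuous_on_def by blast
  then have "(\<psi> \<longlongrightarrow> \<psi> x) (at x within U)" using UX by (rule tendsto_within_subset)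
  moreover have "eventually (\<lambda>y. a \<le> \<psi> y) (at x within U)"
    using assms(2) by (auto simp: eventually_at_filter)
  ultimately show ?thesis using nb by (rule tendsto_lowerbound)
qed

lemma pb_iff:
  assumes "\<phi> \<in> C0 X" "\<psi> \<in> C0 X"
  shows "(\<forall>x\<in>X. pullback X U f \<phi> x \<le> \<psi> x) \<longleftrightarrow> (\<forall>y\<in>U. \<phi> (f y) \<le> \<psi> y)"
proof
  assume A: "\<forall>x\<in>X. pullback X U f \<phi> x \<le> \<psi> x"
  show "\<forall>y\<in>U. \<phi> (f y) \<le> \<psi> y"
  proof
    fix y assume y: "y \<in> U"
    then have "y \<in> X" using UX by blast
    then have "pullback X U f \<phi> y \<le> \<psi> y" using A by blast
    moreover have "pullback X U f \<phi> y = \<phi> (f y)" using y by (simp add: pullback_def ext_E_def)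
    ultimately show "\<phi> (f y) \<le> \<psi> y" by simp
  qed
next
  assume H: "\<forall>y\<in>U. \<phi> (f y) \<le> \<psi> y"
  show "\<forall>x\<in>X. pullback X U f \<phi> x \<le> \<psi> x"
  proof
    fix x assume x: "x \<in> X"
    show "pullback X U f \<phi> x \<le> \<psi> x"
    proof (cases "x \<in> U")
      case True then show ?thesis using H by (simp add: pullback_def ext_E_def)
    next
      case False
      have "x islimpt U" using Xcl x False unfolding closure_def by blast
      then have nb: "\<not> trivial_limit (at x within U)" using trivial_limit_within by blast
      define L where "L = Limsup (at x within U) (\<lambda>y. ereal (\<phi> (f y)))"
      have val: "pullback X U f \<phi> x = real_of_ereal L"
        using False x by (simp add: pullback_def ext_E_def L_def)
      have "eventually (\<lambda>y. ereal (- supnorm X \<phi>) \<le> ereal (\<phi> (f y))) (at x within U)"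
        proof -
        have "\<forall>y. y \<noteq> x \<longrightarrow> y \<in> U \<longrightarrow> ereal (- supnorm X \<phi>) \<le> ereal (\<phi> (f y))"
        proof (intro allI impI)
          fix y assume "y \<in> U"
          then have "\<bar>\<phi> (f y)\<bar> \<le> supnorm X \<phi>" using le_supnorm[OF assms(1) fU] by simp
          then show "ereal (- supnorm X \<phi>) \<le> ereal (\<phi> (f y))" by simp
        qed
        then show ?thesis unfolding eventually_at_filter by (simp add: always_eventually)
      qed
      then have lo: "ereal (- supnorm X \<phi>) \<le> L" unfolding L_def by (rule le_Limsup[OF nb])
      have "(\<psi> \<longlongrightarrow> \<psi> x) (at x within X)"
        using assms(2) x unfolding C0_def continuous_on_def by blast
      then have "(\<psi> \<longlongrightarrow> \<psi> x) (at x within U)" using UX by (rule tendsto_within_subset)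
      then have "((\<lambda>y. ereal (\<psi> y)) \<longlongrightarrow> ereal (\<psi> x)) (at x within U)" by simp
      then have lim: "Limsup (at x within U) (\<lambda>y. ereal (\<psi> y)) = ereal (\<psi> x)"
        by (rule lim_imp_Limsup[OF nb])
      have "eventually (\<lambda>y. ereal (\<phi> (f y)) \<le> ereal (\<psi> y)) (at x within U)"
        using H unfolding eventually_at_filter by (simp add: always_eventually)
      then have "L \<le> ereal (\<psi> x)" unfolding L_def using lim Limsup_mono[of "\<lambda>y. ereal (\<phi> (f y))" "\<lambda>y. ereal (\<psi> y)" "at x within U"] by argo
      with lo show ?thesis unfolding val by (cases L) simp_all
    qed
  qed
qed

lemma push_eq:
  assumes "\<phi> \<in> C0 X"
  shows "T \<nu> \<phi> = Inf (\<nu> ` S \<phi>)"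
proof -
  have "{\<nu> \<psi> | \<psi>. \<psi> \<in> C0 X \<and> (\<forall>x\<in>X. \<psi> x \<ge> pullback X U f \<phi> x)} = \<nu> ` S \<phi>"
    using pb_iff[OF assms] unfolding Sset_def by auto
  then show ?thesis unfolding pushforward_def by simp
qed

end

lemma SMp_sub: "\<nu> \<in> SMp X \<Longrightarrow> \<phi>1 \<in> C0 X \<Longrightarrow> \<phi>2 \<in> C0 X \<Longrightarrow> \<nu> (\<lambda>x. \<phi>1 x + \<phi>2 x) \<le> \<nu> \<phi>1 + \<nu> \<phi>2"
  unfolding SMp_def by blast
lemma SMp_hom: "\<nu> \<in> SMp X \<Longrightarrow> \<phi> \<in> C0 X \<Longrightarrow> c \<ge> 0 \<Longrightarrow> \<nu> (\<lambda>x. c * \<phi> x) = c * \<nu> \<phi>"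
  unfolding SMp_def by blast
lemma SMp_mono: "\<nu> \<in> SMp X \<Longrightarrow> \<phi>1 \<in> C0 X \<Longrightarrow> \<phi>2 \<in> C0 X \<Longrightarrow> (\<And>x. x \<in> X \<Longrightarrow> \<phi>1 x \<le> \<phi>2 x) \<Longrightarrow> \<nu> \<phi>1 \<le> \<nu> \<phi>2"
  unfolding SMp_def by blast
lemma SMp_zero: "\<nu> \<in> SMp X \<Longrightarrow> \<nu> (\<lambda>x. 0) = 0"
  using SMp_hom[of \<nu> X "\<lambda>x. 0" 0] C0_zero[of X] by simp

lemma SMp_intro:
  assumes "\<And>\<phi>1 \<phi>2. \<phi>1 \<in> C0 X \<Longrightarrow> \<phi>2 \<in> C0 X \<Longrightarrow> \<nu> (\<lambda>x. \<phi>1 x + \<phi>2 x) \<le> \<nu> \<phi>1 + \<nu> \<phi>2"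
    and "\<And>\<phi> c. \<phi> \<in> C0 X \<Longrightarrow> c > 0 \<Longrightarrow> \<nu> (\<lambda>x. c * \<phi> x) = c * \<nu> \<phi>"
    and "\<nu> (\<lambda>x. 0) = 0"
    and "\<And>\<phi>. \<phi> \<in> C0 X \<Longrightarrow> \<bar>\<nu> \<phi>\<bar> \<le> C * supnorm X \<phi>"
    and "\<And>\<phi>1 \<phi>2. \<phi>1 \<in> C0 X \<Longrightarrow> \<phi>2 \<in> C0 X \<Longrightarrow> (\<forall>x\<in>X. \<phi>1 x \<le> \<phi>2 x) \<Longrightarrow> \<nu> \<phi>1 \<le> \<nu> \<phi>2"
  shows "\<nu> \<in> SMp X"
proof -
  have "\<forall>\<phi>\<in>C0 X. \<forall>c::real. c \<ge> 0 \<longrightarrow> \<nu> (\<lambda>x. c * \<phi> x) = c * \<nu> \<phi>"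
  proof (intro ballI allI impI)
    fix \<phi> and c :: real assume "\<phi> \<in> C0 X" "c \<ge> 0"
    then show "\<nu> (\<lambda>x. c * \<phi> x) = c * \<nu> \<phi>"
      using assms(2,3) by (cases "c = 0") auto
  qed
  then show ?thesis unfolding SMp_def using assms(1,4,5) by blast
qed

lemma cst_mult: "cst X c = (\<lambda>x. c * cst X 1 x)"
  unfolding cst_def by auto

context setting begin

lemma SMp_cst: "\<nu> \<in> SMp X \<Longrightarrow> c \<ge> 0 \<Longrightarrow> \<nu> (cst X c) = c * \<nu> e"
  using SMp_hom[OF _ C0_cst] by (subst cst_mult) auto

lemma SMp_e: "\<nu> \<in> SMp X \<Longrightarrow> 0 \<le> \<nu> e"
proof -
  assume a: "\<nu> \<in> SMp X"
  have "\<nu> (\<lambda>x. 0) \<le> \<nu> e"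
    by (rule SMp_mono[OF a C0_zero C0_cst]) (simp add: cst_def)
  then show ?thesis using SMp_zero[OF a] by simp
qed

lemma SMp_cst_neg:
  assumes "\<nu> \<in> SMp X" "c \<ge> 0"
  shows "- c * \<nu> e \<le> \<nu> (cst X (-c))"
proof -
  have eq: "(\<lambda>x. cst X c x + cst X (-c) x) = (\<lambda>x. 0)" by (simp add: cst_def fun_eq_iff)
  have "\<nu> (\<lambda>x. cst X c x + cst X (-c) x) \<le> \<nu> (cst X c) + \<nu> (cst X (-c))"
    by (rule SMp_sub[OF assms(1) C0_cst C0_cst])
  then have "0 \<le> \<nu> (cst X c) + \<nu> (cst X (-c))"
    unfolding eq SMp_zero[OF assms(1)] .
  then show ?thesis using SMp_cst[OF assms] by simp
qed

lemma SMp_lower: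
  assumes "\<nu> \<in> SMp X" "\<psi> \<in> C0 X" "c \<ge> 0" "\<forall>x\<in>X. -c \<le> \<psi> x"
  shows "- c * \<nu> e \<le> \<nu> \<psi>"
proof -
  have "\<nu> (cst X (-c)) \<le> \<nu> \<psi>"
    by (rule SMp_mono[OF assms(1) C0_cst assms(2)]) (simp add: cst_def assms(4))
  then show ?thesis using SMp_cst_neg[OF assms(1,3)] by simp
qed

lemma SMp_upper:
  assumes "\<nu> \<in> SMp X" "\<psi> \<in> C0 X" "c \<ge> 0" "\<forall>x\<in>X. \<psi> x \<le> c"
  shows "\<nu> \<psi> \<le> c * \<nu> e"
proof -
  have "\<nu> \<psi> \<le> \<nu> (cst X c)"
    by (rule SMp_mono[OF assms(1) assms(2) C0_cst]) (simp add: cst_def assms(4))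
  then show ?thesis using SMp_cst[OF assms(1,3)] by simp
qed

lemma SMp_abs:
  assumes "\<nu> \<in> SMp X" "\<phi> \<in> C0 X"
  shows "\<bar>\<nu> \<phi>\<bar> \<le> \<nu> e * supnorm X \<phi>"
proof -
  have b: "\<forall>x\<in>X. -supnorm X \<phi> \<le> \<phi> x \<and> \<phi> x \<le> supnorm X \<phi>"
    using le_supnorm2[OF assms(2)] by blast
  have "- supnorm X \<phi> * \<nu> e \<le> \<nu> \<phi>" using b supnorm_nonneg[OF assms(2)]
    by (intro SMp_lower[OF assms]) auto
  moreover have "\<nu> \<phi> \<le> supnorm X \<phi> * \<nu> e" using b supnorm_nonneg[OF assms(2)]
    by (intro SMp_upper[OF assms]) auto
  ultimately show ?thesis by (simp add: abs_le_iff algebra_simps)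
qed

lemma S_cst: "\<phi> \<in> C0 X \<Longrightarrow> (\<forall>x\<in>X. \<phi> x \<le> c) \<Longrightarrow> cst X c \<in> S \<phi>"
  unfolding Sset_def using C0_cst fU UX by (auto simp: cst_def)

lemma S_ne: "\<phi> \<in> C0 X \<Longrightarrow> cst X (supnorm X \<phi>) \<in> S \<phi>"
  using le_supnorm2 by (intro S_cst) auto

lemma S_C0: "\<psi> \<in> S \<phi> \<Longrightarrow> \<psi> \<in> C0 X"
  unfolding Sset_def by auto

lemma S_low:
  assumes "\<phi> \<in> C0 X" "\<psi> \<in> S \<phi>" "(\<forall>x\<in>X. a \<le> \<phi> x)" "x \<in> X"
  shows "a \<le> \<psi> x"
proof (rule density[OF _ _ assms(4)])
  show "continuous_on X \<psi>" using assms(2) unfolding Sset_def C0_def by auto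
  show "\<forall>y\<in>U. a \<le> \<psi> y"
  proof
    fix y assume y: "y \<in> U"
    have "a \<le> \<phi> (f y)" using assms(3) fU[OF y] by blast
    also have "\<phi> (f y) \<le> \<psi> y" using assms(2) y unfolding Sset_def by blast
    finally show "a \<le> \<psi> y" .
  qed
qed

lemma T_bdd:
  assumes "\<nu> \<in> SMp X" "\<phi> \<in> C0 X"
  shows "bdd_below (\<nu> ` S \<phi>)"
proof (rule bdd_belowI2)
  fix \<psi> assume "\<psi> \<in> S \<phi>"
  then show "- supnorm X \<phi> * \<nu> e \<le> \<nu> \<psi>"
    using S_low[OF assms(2)] le_supnorm2[OF assms(2)] supnorm_nonneg[OF assms(2)]
    by (intro SMp_lower[OF assms(1) S_C0]) auto
qed

lemma T_le: "\<nu> \<in> SMp X \<Longrightarrow> \<phi> \<in> C0 X \<Longrightarrow> \<psi> \<in> S \<phi> \<Longrightarrow> T \<nu> \<phi> \<le> \<nu> \<psi>"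
  using push_eq[of \<phi> \<nu>] T_bdd[of \<nu> \<phi>] by (simp add: cInf_lower)

lemma T_ge: "\<phi> \<in> C0 X \<Longrightarrow> (\<And>\<psi>. \<psi> \<in> S \<phi> \<Longrightarrow> a \<le> \<nu> \<psi>) \<Longrightarrow> a \<le> T \<nu> \<phi>"
  using push_eq[of \<phi> \<nu>] S_ne[of \<phi>] by (auto intro!: cInf_greatest)

lemma S_add: "\<psi>1 \<in> S \<phi>1 \<Longrightarrow> \<psi>2 \<in> S \<phi>2 \<Longrightarrow> (\<lambda>x. \<psi>1 x + \<psi>2 x) \<in> S (\<lambda>x. \<phi>1 x + \<phi>2 x)"
  unfolding Sset_def by (auto intro: C0_add add_mono)

lemma S_mult: "\<psi> \<in> S \<phi> \<Longrightarrow> c \<ge> 0 \<Longrightarrow> (\<lambda>x. c * \<psi> x) \<in> S (\<lambda>x. c * \<phi> x)"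
  unfolding Sset_def by (auto intro: C0_mult mult_left_mono)

lemma T_sub:
  assumes \<nu>: "\<nu> \<in> SMp X" and p: "\<phi>1 \<in> C0 X" "\<phi>2 \<in> C0 X"
  shows "T \<nu> (\<lambda>x. \<phi>1 x + \<phi>2 x) \<le> T \<nu> \<phi>1 + T \<nu> \<phi>2"
proof -
  have p12: "(\<lambda>x. \<phi>1 x + \<phi>2 x) \<in> C0 X" using p by (rule C0_add)
  have key: "T \<nu> (\<lambda>x. \<phi>1 x + \<phi>2 x) \<le> \<nu> \<psi>1 + \<nu> \<psi>2" if "\<psi>1 \<in> S \<phi>1" "\<psi>2 \<in> S \<phi>2" for \<psi>1 \<psi>2
  proof -
    have "T \<nu> (\<lambda>x. \<phi>1 x + \<phi>2 x) \<le> \<nu> (\<lambda>x. \<psi>1 x + \<psi>2 x)"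
      by (rule T_le[OF \<nu> p12 S_add[OF that]])
    also have "\<dots> \<le> \<nu> \<psi>1 + \<nu> \<psi>2" by (rule SMp_sub[OF \<nu> S_C0[OF that(1)] S_C0[OF that(2)]])
    finally show ?thesis .
  qed
  have "T \<nu> (\<lambda>x. \<phi>1 x + \<phi>2 x) - \<nu> \<psi>2 \<le> T \<nu> \<phi>1" if "\<psi>2 \<in> S \<phi>2" for \<psi>2
    using key[OF _ that] by (intro T_ge[OF p(1)]) (simp add: algebra_simps)
  then have "T \<nu> (\<lambda>x. \<phi>1 x + \<phi>2 x) - T \<nu> \<phi>1 \<le> T \<nu> \<phi>2"
    by (intro T_ge[OF p(2)]) (simp add: algebra_simps)
  then show ?thesis by simp
qed

lemma T_hom:
  assumes \<nu>: "\<nu> \<in> SMp X" and p: "\<phi> \<in> C0 X" and c: "c > 0"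
  shows "T \<nu> (\<lambda>x. c * \<phi> x) = c * T \<nu> \<phi>"
proof (rule antisym)
  have pc: "(\<lambda>x. c * \<phi> x) \<in> C0 X" using p by (rule C0_mult)
  have "T \<nu> (\<lambda>x. c * \<phi> x) / c \<le> \<nu> \<psi>" if "\<psi> \<in> S \<phi>" for \<psi>
  proof -
    have "T \<nu> (\<lambda>x. c * \<phi> x) \<le> \<nu> (\<lambda>x. c * \<psi> x)"
      using c by (intro T_le[OF \<nu> pc S_mult[OF that]]) simp
    also have "\<dots> = c * \<nu> \<psi>" using c by (intro SMp_hom[OF \<nu> S_C0[OF that]]) simp
    finally show ?thesis using c by (simp add: field_simps)
  qed
  then have "T \<nu> (\<lambda>x. c * \<phi> x) / c \<le> T \<nu> \<phi>" by (intro T_ge[OF p])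
  then show "T \<nu> (\<lambda>x. c * \<phi> x) \<le> c * T \<nu> \<phi>" using c by (simp add: field_simps)
  have "c * T \<nu> \<phi> \<le> \<nu> \<psi>" if "\<psi> \<in> S (\<lambda>x. c * \<phi> x)" for \<psi>
  proof -
    have "(\<lambda>x. (1/c) * \<psi> x) \<in> S (\<lambda>x. (1/c) * (c * \<phi> x))"
      using c by (intro S_mult[OF that]) simp
    then have "(\<lambda>x. (1/c) * \<psi> x) \<in> S \<phi>" using c by simp
    then have "T \<nu> \<phi> \<le> \<nu> (\<lambda>x. (1/c) * \<psi> x)" by (rule T_le[OF \<nu> p])
    also have "\<dots> = (1/c) * \<nu> \<psi>" using c by (intro SMp_hom[OF \<nu> S_C0[OF that]]) simp
    finally show ?thesis using c by (simp add: field_simps)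
  qed
  then show "c * T \<nu> \<phi> \<le> T \<nu> (\<lambda>x. c * \<phi> x)" by (intro T_ge[OF pc])
qed

lemma T_zero:
  assumes \<nu>: "\<nu> \<in> SMp X"
  shows "T \<nu> (\<lambda>x. 0) = 0"
proof (rule antisym)
  have "(\<lambda>x. 0) \<in> S (\<lambda>x. 0)" unfolding Sset_def using C0_zero by auto
  then have "T \<nu> (\<lambda>x. 0) \<le> \<nu> (\<lambda>x. 0)" by (rule T_le[OF \<nu> C0_zero])
  then show "T \<nu> (\<lambda>x. 0) \<le> 0" using SMp_zero[OF \<nu>] by simp
  have "0 \<le> \<nu> \<psi>" if "\<psi> \<in> S (\<lambda>x. 0)" for \<psi>
  proof -
    have "\<nu> (\<lambda>x. 0) \<le> \<nu> \<psi>"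
      by (rule SMp_mono[OF \<nu> C0_zero S_C0[OF that]]) (rule S_low[OF C0_zero that], auto)
    then show ?thesis using SMp_zero[OF \<nu>] by simp
  qed
  then show "0 \<le> T \<nu> (\<lambda>x. 0)" by (intro T_ge[OF C0_zero])
qed

lemma T_abs:
  assumes \<nu>: "\<nu> \<in> SMp X" and p: "\<phi> \<in> C0 X"
  shows "\<bar>T \<nu> \<phi>\<bar> \<le> \<nu> e * supnorm X \<phi>"
proof -
  have s0: "0 \<le> supnorm X \<phi>" by (rule supnorm_nonneg[OF p])
  have "T \<nu> \<phi> \<le> \<nu> (cst X (supnorm X \<phi>))" by (rule T_le[OF \<nu> p S_ne[OF p]])
  also have "\<dots> = supnorm X \<phi> * \<nu> e" by (rule SMp_cst[OF \<nu> s0])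
  finally have u: "T \<nu> \<phi> \<le> supnorm X \<phi> * \<nu> e" .
  have "- supnorm X \<phi> * \<nu> e \<le> \<nu> \<psi>" if "\<psi> \<in> S \<phi>" for \<psi>
    using S_low[OF p that] le_supnorm2[OF p] s0
    by (intro SMp_lower[OF \<nu> S_C0[OF that]]) auto
  then have l: "- supnorm X \<phi> * \<nu> e \<le> T \<nu> \<phi>" by (intro T_ge[OF p])
  from u l show ?thesis by (simp add: abs_le_iff algebra_simps)
qed

lemma T_monophi:
  assumes \<nu>: "\<nu> \<in> SMp X" and p: "\<phi>1 \<in> C0 X" "\<phi>2 \<in> C0 X" and le: "\<forall>x\<in>X. \<phi>1 x \<le> \<phi>2 x"
  shows "T \<nu> \<phi>1 \<le> T \<nu> \<phi>2"
proof (rule T_ge[OF p(2)])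
  fix \<psi> assume a: "\<psi> \<in> S \<phi>2"
  have "\<psi> \<in> S \<phi>1" using a le fU unfolding Sset_def by (auto intro: order_trans)
  then show "T \<nu> \<phi>1 \<le> \<nu> \<psi>" by (rule T_le[OF \<nu> p(1)])
qed

lemma T_SMp:
  assumes \<nu>: "\<nu> \<in> SMp X"
  shows "T \<nu> \<in> SMp X"
  by (rule SMp_intro[where C="\<nu> e"])
     (auto intro: T_sub[OF \<nu>] T_hom[OF \<nu>] T_zero[OF \<nu>] T_abs[OF \<nu>] T_monophi[OF \<nu>])

lemma T_e: "\<nu> \<in> SMp X \<Longrightarrow> T \<nu> e \<le> \<nu> e"
  by (rule T_le[OF _ C0_cst S_cst[OF C0_cst]]) (auto simp: cst_def)

lemma T_mono:
  assumes \<nu>: "\<nu>1 \<in> SMp X" and le: "\<forall>\<phi>\<in>C0 X. \<nu>1 \<phi> \<le> \<nu>2 \<phi>" and p: "\<phi> \<in> C0 X"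
  shows "T \<nu>1 \<phi> \<le> T \<nu>2 \<phi>"
proof (rule T_ge[OF p])
  fix \<psi> assume a: "\<psi> \<in> S \<phi>"
  have "T \<nu>1 \<phi> \<le> \<nu>1 \<psi>" by (rule T_le[OF \<nu> p a])
  also have "\<dots> \<le> \<nu>2 \<psi>" using le S_C0[OF a] by blast
  finally show "T \<nu>1 \<phi> \<le> \<nu>2 \<psi>" .
qed

lemma it_SMp: "\<nu> \<in> SMp X \<Longrightarrow> (T ^^ n) \<nu> \<in> SMp X"
  by (induction n) (auto intro: T_SMp)

lemma it_e: "\<nu> \<in> SMp X \<Longrightarrow> (T ^^ n) \<nu> e \<le> \<nu> e"
proof (induction n)
  case (Suc n)
  have "(T ^^ Suc n) \<nu> e \<le> (T ^^ n) \<nu> e" using T_e[OF it_SMp[OF Suc.prems]] by simp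
  then show ?case using Suc by simp
qed simp

lemma it_abs:
  assumes "\<nu> \<in> SMp X" "\<phi> \<in> C0 X"
  shows "\<bar>(T ^^ n) \<nu> \<phi>\<bar> \<le> \<nu> e * supnorm X \<phi>"
proof -
  have "\<bar>(T ^^ n) \<nu> \<phi>\<bar> \<le> (T ^^ n) \<nu> e * supnorm X \<phi>" by (rule SMp_abs[OF it_SMp[OF assms(1)] assms(2)])
  also have "\<dots> \<le> \<nu> e * supnorm X \<phi>"
    by (rule mult_right_mono[OF it_e[OF assms(1)] supnorm_nonneg[OF assms(2)]])
  finally show ?thesis .
qed

lemma cesaro_ineq:
  assumes \<mu>0: "\<mu>0 \<in> SMp X" and p: "\<phi> \<in> C0 X" and q: "\<psi> \<in> S \<phi>"
  shows "(\<Sum>j=0..n. (T ^^ j) \<mu>0 \<phi>) - 2 * (\<mu>0 e * supnorm X \<phi>) \<le> (\<Sum>j=0..n. (T ^^ j) \<mu>0 \<psi>)"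
proof -
  define g where "g j = (T ^^ j) \<mu>0 \<phi>" for j
  have "(\<Sum>j=0..n. g (Suc j)) = (\<Sum>j=0..Suc n. g j) - g 0"
    using sum.atLeast0_atMost_Suc_shift[of g n] by simp
  also have "\<dots> = (\<Sum>j=0..n. g j) + g (Suc n) - g 0" by simp
  finally have tel: "(\<Sum>j=0..n. g (Suc j)) = (\<Sum>j=0..n. g j) + g (Suc n) - g 0" .
  have "g (Suc n) \<ge> - (\<mu>0 e * supnorm X \<phi>)" "g 0 \<le> \<mu>0 e * supnorm X \<phi>"
    using it_abs[OF \<mu>0 p, of "Suc n"] it_abs[OF \<mu>0 p, of 0] unfolding g_def by (auto simp: abs_le_iff)
  moreover have "(\<Sum>j=0..n. g (Suc j)) \<le> (\<Sum>j=0..n. (T ^^ j) \<mu>0 \<psi>)"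
  proof (rule sum_mono)
    fix j
    have "T ((T ^^ j) \<mu>0) \<phi> \<le> (T ^^ j) \<mu>0 \<psi>" by (rule T_le[OF it_SMp[OF \<mu>0] p q])
    then show "g (Suc j) \<le> (T ^^ j) \<mu>0 \<psi>" unfolding g_def by simp
  qed
  ultimately show ?thesis using tel unfolding g_def by linarith
qed

lemma part1:
  assumes \<mu>0: "\<mu>0 \<in> SMp X"
    and wc: "weak_cluster_point X (\<lambda>n \<phi>. (1 / real n) * (\<Sum>j=0..n. ((T ^^ j) \<mu>0) \<phi>)) \<mu>"
  shows "sm_le X \<mu> (T \<mu>)"
  unfolding sm_le_def
proof
  fix \<phi> assume p: "\<phi> \<in> C0 X"
  obtain r where r: "strict_mono r"
    and wk: "weak_conv X ((\<lambda>n \<phi>. (1 / real n) * (\<Sum>j=0..n. ((T ^^ j) \<mu>0) \<phi>)) \<circ> r) \<mu>"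
    using wc unfolding weak_cluster_point_def by blast
  have lim: "(\<lambda>k. (1 / real (r k)) * (\<Sum>j=0..r k. ((T ^^ j) \<mu>0) \<xi>)) \<longlonglongrightarrow> \<mu> \<xi>" if "\<xi> \<in> C0 X" for \<xi>
    using wk that unfolding weak_conv_def by (simp add: o_def)
  define K where "K = 2 * (\<mu>0 e * supnorm X \<phi>)"
  have inv0: "(\<lambda>k. 1 / real (r k)) \<longlonglongrightarrow> 0"
    using LIMSEQ_subseq_LIMSEQ[OF lim_1_over_n r] by (simp add: o_def)
  show "\<mu> \<phi> \<le> T \<mu> \<phi>"
  proof (rule T_ge[OF p])
    fix \<psi> assume q: "\<psi> \<in> S \<phi>"
    have l1: "(\<lambda>k. (1 / real (r k)) * (\<Sum>j=0..r k. ((T ^^ j) \<mu>0) \<phi>) - K * (1 / real (r k))) \<longlonglongrightarrow> \<mu> \<phi> - K * 0"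
      by (intro tendsto_intros lim[OF p] inv0)
    have ev: "eventually (\<lambda>k. (1 / real (r k)) * (\<Sum>j=0..r k. ((T ^^ j) \<mu>0) \<phi>) - K * (1 / real (r k))
              \<le> (1 / real (r k)) * (\<Sum>j=0..r k. ((T ^^ j) \<mu>0) \<psi>)) sequentially"
    proof (rule eventually_sequentiallyI[of 1])
      fix k :: nat assume "1 \<le> k"
      then have "0 < real (r k)" using seq_suble[OF r, of k] by linarith
      then have pos: "0 \<le> 1 / real (r k)" by simp
      have "(1 / real (r k)) * ((\<Sum>j=0..r k. ((T ^^ j) \<mu>0) \<phi>) - K) \<le> (1 / real (r k)) * (\<Sum>j=0..r k. ((T ^^ j) \<mu>0) \<psi>)"
        using mult_left_mono[OF cesaro_ineq[OF \<mu>0 p q, of "r k"] pos] unfolding K_def by simp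
      then show "(1 / real (r k)) * (\<Sum>j=0..r k. ((T ^^ j) \<mu>0) \<phi>) - K * (1 / real (r k))
              \<le> (1 / real (r k)) * (\<Sum>j=0..r k. ((T ^^ j) \<mu>0) \<psi>)" by (simp add: algebra_simps)
    qed
    have "\<mu> \<phi> - K * 0 \<le> \<mu> \<psi>"
      by (rule tendsto_le[OF _ lim[OF S_C0[OF q]] l1 ev]) simp
    then show "\<mu> \<phi> \<le> \<mu> \<psi>" by simp
  qed
qed

lemma decr:
  assumes \<rho>: "\<rho> \<in> SMp X" and dec: "sm_le X (T \<rho>) \<rho>"
  shows "\<exists>\<mu>inf\<in>SMp X. weak_conv X (\<lambda>n. (T ^^ n) \<rho>) \<mu>inf \<and> sm_le X \<mu>inf \<rho>
           \<and> sm_eq X (T \<mu>inf) \<mu>inf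
           \<and> (\<forall>\<nu>\<in>SMp X. sm_le X \<nu> (T \<nu>) \<and> sm_le X \<nu> \<rho> \<longrightarrow> sm_le X \<nu> \<mu>inf)"
proof -
  define \<nu> where "\<nu> n = (T ^^ n) \<rho>" for n
  have \<nu>S: "\<nu> n \<in> SMp X" for n unfolding \<nu>_def by (rule it_SMp[OF \<rho>])
  have \<nu>Suc: "\<nu> (Suc n) = T (\<nu> n)" for n unfolding \<nu>_def by simp
  have step: "\<forall>\<phi>\<in>C0 X. \<nu> (Suc n) \<phi> \<le> \<nu> n \<phi>" for n
  proof (induction n)
    case 0 then show ?case using dec unfolding sm_le_def \<nu>_def by simp
  next
    case (Suc n)
    show ?case unfolding \<nu>Suc[of "Suc n"] using T_mono[OF \<nu>S Suc.IH] \<nu>Suc[of n] by simp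
  qed
  define \<mu>inf where "\<mu>inf \<phi> = lim (\<lambda>n. \<nu> n \<phi>)" for \<phi>
  have conv: "(\<lambda>n. \<nu> n \<phi>) \<longlonglongrightarrow> \<mu>inf \<phi> \<and> (\<forall>n. \<mu>inf \<phi> \<le> \<nu> n \<phi>)" if p: "\<phi> \<in> C0 X" for \<phi>
  proof -
    have "decseq (\<lambda>n. \<nu> n \<phi>)" using step p by (intro decseq_SucI) blast
    moreover have "\<forall>i. - (\<rho> e * supnorm X \<phi>) \<le> \<nu> i \<phi>"
      using it_abs[OF \<rho> p] unfolding \<nu>_def by (meson abs_le_D2 minus_le_iff)
    ultimately obtain L where L: "(\<lambda>n. \<nu> n \<phi>) \<longlonglongrightarrow> L" "\<forall>i. L \<le> \<nu> i \<phi>"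
      by (rule decseq_convergent)
    have "\<mu>inf \<phi> = L" unfolding \<mu>inf_def using L(1) by (rule limI)
    then show ?thesis using L by simp
  qed
  have lim: "(\<lambda>n. \<nu> n \<phi>) \<longlonglongrightarrow> \<mu>inf \<phi>" if "\<phi> \<in> C0 X" for \<phi> using conv[OF that] by blast
  have low: "\<mu>inf \<phi> \<le> \<nu> n \<phi>" if "\<phi> \<in> C0 X" for \<phi> n using conv[OF that] by blast
  have \<mu>S: "\<mu>inf \<in> SMp X"
  proof (rule SMp_intro[where C="\<rho> e"])
    fix \<phi>1 \<phi>2 assume p: "\<phi>1 \<in> C0 X" "\<phi>2 \<in> C0 X"
    show "\<mu>inf (\<lambda>x. \<phi>1 x + \<phi>2 x) \<le> \<mu>inf \<phi>1 + \<mu>inf \<phi>2"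
      by (rule LIMSEQ_le[OF lim[OF C0_add[OF p]] tendsto_add[OF lim[OF p(1)] lim[OF p(2)]]])
         (use SMp_sub[OF \<nu>S p] in blast)
  next
    fix \<phi>1 \<phi>2 assume p: "\<phi>1 \<in> C0 X" "\<phi>2 \<in> C0 X" and le: "\<forall>x\<in>X. \<phi>1 x \<le> \<phi>2 x"
    show "\<mu>inf \<phi>1 \<le> \<mu>inf \<phi>2"
      by (rule LIMSEQ_le[OF lim[OF p(1)] lim[OF p(2)]]) (use SMp_mono[OF \<nu>S p] le in blast)
  next
    fix \<phi> and c :: real assume p: "\<phi> \<in> C0 X" and c: "c > 0"
    have "(\<lambda>n. \<nu> n (\<lambda>x. c * \<phi> x)) = (\<lambda>n. c * \<nu> n \<phi>)" using c by (simp add: SMp_hom[OF \<nu>S p])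
    then have "(\<lambda>n. \<nu> n (\<lambda>x. c * \<phi> x)) \<longlonglongrightarrow> c * \<mu>inf \<phi>" using lim[OF p] by (simp add: tendsto_mult_left)
    then show "\<mu>inf (\<lambda>x. c * \<phi> x) = c * \<mu>inf \<phi>" using lim[OF C0_mult[OF p]] LIMSEQ_unique by blast
  next
    have "(\<lambda>n. \<nu> n (\<lambda>x. 0)) = (\<lambda>n. 0)" by (simp add: SMp_zero[OF \<nu>S])
    then show "\<mu>inf (\<lambda>x. 0) = 0" using lim[OF C0_zero] LIMSEQ_unique by (metis tendsto_const)
  next
    fix \<phi> assume p: "\<phi> \<in> C0 X"
    have "\<bar>\<mu>inf \<phi>\<bar> \<le> \<rho> e * supnorm X \<phi>"
      by (rule LIMSEQ_le_const2[OF tendsto_rabs[OF lim[OF p]]])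
         (use it_abs[OF \<rho> p] in \<open>auto simp: \<nu>_def\<close>)
    then show "\<bar>\<mu>inf \<phi>\<bar> \<le> \<rho> e * supnorm X \<phi>" .
  qed
  have wconv: "weak_conv X (\<lambda>n. (T ^^ n) \<rho>) \<mu>inf"
    unfolding weak_conv_def using it_abs[OF \<rho>] lim unfolding \<nu>_def by blast
  have le\<rho>: "sm_le X \<mu>inf \<rho>" unfolding sm_le_def using low[of _ 0] by (simp add: \<nu>_def)
  have fix1: "T \<mu>inf \<phi> \<le> \<mu>inf \<phi>" if p: "\<phi> \<in> C0 X" for \<phi>
  proof (rule LIMSEQ_le_const[OF LIMSEQ_Suc[OF lim[OF p]]])
    show "\<exists>N. \<forall>n\<ge>N. T \<mu>inf \<phi> \<le> \<nu> (Suc n) \<phi>"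
      using T_mono[OF \<mu>S _ p] low unfolding \<nu>Suc by blast
  qed
  have fix2: "\<mu>inf \<phi> \<le> T \<mu>inf \<phi>" if p: "\<phi> \<in> C0 X" for \<phi>
  proof (rule T_ge[OF p])
    fix \<psi> assume q: "\<psi> \<in> S \<phi>"
    show "\<mu>inf \<phi> \<le> \<mu>inf \<psi>"
      by (rule LIMSEQ_le[OF LIMSEQ_Suc[OF lim[OF p]] lim[OF S_C0[OF q]]])
         (use T_le[OF \<nu>S p q] in \<open>auto simp: \<nu>Suc\<close>)
  qed
  have fixeq: "sm_eq X (T \<mu>inf) \<mu>inf" unfolding sm_eq_def using fix1 fix2 by (simp add: antisym)
  have largest: "sm_le X \<nu>' \<mu>inf" if \<nu>': "\<nu>' \<in> SMp X" "sm_le X \<nu>' (T \<nu>')" "sm_le X \<nu>' \<rho>" for \<nu>'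
  proof -
    have below: "\<forall>\<phi>\<in>C0 X. \<nu>' \<phi> \<le> \<nu> n \<phi>" for n
    proof (induction n)
      case 0 then show ?case using \<nu>'(3) unfolding sm_le_def \<nu>_def by simp
    next
      case (Suc n)
      show ?case
      proof
        fix \<phi> assume p: "\<phi> \<in> C0 X"
        have "\<nu>' \<phi> \<le> T \<nu>' \<phi>" using \<nu>'(2) p unfolding sm_le_def by blast
        also have "\<dots> \<le> T (\<nu> n) \<phi>" by (rule T_mono[OF \<nu>'(1) Suc.IH p])
        finally show "\<nu>' \<phi> \<le> \<nu> (Suc n) \<phi>" unfolding \<nu>Suc .
      qed
    qed
    show ?thesis unfolding sm_le_def
    proof
      fix \<phi> assume p: "\<phi> \<in> C0 X"
      show "\<nu>' \<phi> \<le> \<mu>inf \<phi>" by (rule LIMSEQ_le_const[OF lim[OF p]]) (use below p in blast)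
    qed
  qed
  show ?thesis using \<mu>S wconv le\<rho> fixeq largest by blast
qed

lemma supX: "\<phi> \<in> C0 X \<Longrightarrow> x \<in> X \<Longrightarrow> \<phi> x \<le> Sup (\<phi> ` X)"
  by (rule cSUP_upper[OF _ bnd(2)])

lemma supX_least:
  fixes \<phi> :: "'a \<Rightarrow> real"
  shows "(\<And>x. x \<in> X \<Longrightarrow> \<phi> x \<le> M) \<Longrightarrow> Sup (\<phi> ` X) \<le> M"
  by (rule cSUP_least[OF ne]) auto

lemma top_SMp:
  assumes \<mu>0: "\<mu>0 \<in> SMp X"
  defines "tp \<equiv> \<lambda>\<phi>. \<mu>0 e * max 0 (Sup (\<phi> ` X))"
  shows "tp \<in> SMp X" "sm_le X \<mu>0 tp" "sm_le X (T tp) tp"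
proof -
  have K: "0 \<le> \<mu>0 e" by (rule SMp_e[OF \<mu>0])
  show tS: "tp \<in> SMp X"
  proof (rule SMp_intro[where C="\<mu>0 e"])
    fix \<phi>1 \<phi>2 assume p: "\<phi>1 \<in> C0 X" "\<phi>2 \<in> C0 X"
    have "Sup ((\<lambda>x. \<phi>1 x + \<phi>2 x) ` X) \<le> Sup (\<phi>1 ` X) + Sup (\<phi>2 ` X)"
      by (rule supX_least) (intro add_mono supX p; assumption)
    then have "max 0 (Sup ((\<lambda>x. \<phi>1 x + \<phi>2 x) ` X)) \<le> max 0 (Sup (\<phi>1 ` X)) + max 0 (Sup (\<phi>2 ` X))"
      by linarith
    then show "tp (\<lambda>x. \<phi>1 x + \<phi>2 x) \<le> tp \<phi>1 + tp \<phi>2"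
      unfolding tp_def using K by (simp add: distrib_left[symmetric] mult_left_mono)
  next
    fix \<phi> and c :: real assume p: "\<phi> \<in> C0 X" and c: "c > 0"
    have "Sup ((\<lambda>x. c * \<phi> x) ` X) \<le> c * Sup (\<phi> ` X)"
      by (rule supX_least) (use c supX[OF p] in simp)
    moreover have "Sup (\<phi> ` X) \<le> Sup ((\<lambda>x. c * \<phi> x) ` X) / c"
    proof (rule supX_least)
      fix x assume x: "x \<in> X"
      have "c * \<phi> x \<le> Sup ((\<lambda>x. c * \<phi> x) ` X)" by (rule supX[OF C0_mult[OF p] x])
      then show "\<phi> x \<le> Sup ((\<lambda>x. c * \<phi> x) ` X) / c" using c by (simp add: field_simps)
    qed
    ultimately have "Sup ((\<lambda>x. c * \<phi> x) ` X) = c * Sup (\<phi> ` X)" using c by (simp add: field_simps)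
    moreover have "max 0 (c * Sup (\<phi> ` X)) = c * max 0 (Sup (\<phi> ` X))" using c
      by (simp add: max_def zero_le_mult_iff)
    ultimately show "tp (\<lambda>x. c * \<phi> x) = c * tp \<phi>" unfolding tp_def by simp
  next
    have "(\<lambda>x. 0::real) ` X = {0}" using ne by auto
    then show "tp (\<lambda>x. 0) = 0" unfolding tp_def by simp
  next
    fix \<phi> assume p: "\<phi> \<in> C0 X"
    have "Sup (\<phi> ` X) \<le> supnorm X \<phi>"
      by (rule supX_least) (use le_supnorm2[OF p] in blast)
    then have "max 0 (Sup (\<phi> ` X)) \<le> supnorm X \<phi>" using supnorm_nonneg[OF p] by simp
    then show "\<bar>tp \<phi>\<bar> \<le> \<mu>0 e * supnorm X \<phi>" unfolding tp_def using K
      by (simp add: abs_mult mult_left_mono)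
  next
    fix \<phi>1 \<phi>2 assume p: "\<phi>1 \<in> C0 X" "\<phi>2 \<in> C0 X" and le: "\<forall>x\<in>X. \<phi>1 x \<le> \<phi>2 x"
    have "Sup (\<phi>1 ` X) \<le> Sup (\<phi>2 ` X)"
      by (rule supX_least) (use le supX[OF p(2)] in \<open>blast intro: order_trans\<close>)
    then show "tp \<phi>1 \<le> tp \<phi>2" unfolding tp_def using K by (simp add: mult_left_mono)
  qed
  show "sm_le X \<mu>0 tp" unfolding sm_le_def
  proof
    fix \<phi> assume p: "\<phi> \<in> C0 X"
    have "\<mu>0 \<phi> \<le> max 0 (Sup (\<phi> ` X)) * \<mu>0 e"
      by (rule SMp_upper[OF \<mu>0 p]) (use supX[OF p] in \<open>auto intro: max.coboundedI2\<close>)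
    then show "\<mu>0 \<phi> \<le> tp \<phi>" unfolding tp_def by (simp add: mult.commute)
  qed
  show "sm_le X (T tp) tp" unfolding sm_le_def
  proof
    fix \<phi> assume p: "\<phi> \<in> C0 X"
    define s where "s = max 0 (Sup (\<phi> ` X))"
    have "cst X s \<in> S \<phi>" by (rule S_cst[OF p]) (use supX[OF p] in \<open>auto simp: s_def intro: max.coboundedI2\<close>)
    then have "T tp \<phi> \<le> tp (cst X s)" by (rule T_le[OF tS p])
    moreover have "cst X s ` X = {s}" using ne by (auto simp: cst_def)
    moreover have "max 0 s = s" by (simp add: s_def)
    ultimately show "T tp \<phi> \<le> tp \<phi>" unfolding tp_def s_def by simp
  qed
qed

lemma directed:
  assumes \<mu>0: "\<mu>0 \<in> SMp X" and inc: "sm_le X \<mu>0 (T \<mu>0)"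
    and \<nu>1: "\<nu>1 \<in> SMp X" "sm_le X \<mu>0 \<nu>1" "sm_eq X (T \<nu>1) \<nu>1"
    and \<nu>2: "\<nu>2 \<in> SMp X" "sm_le X \<mu>0 \<nu>2" "sm_eq X (T \<nu>2) \<nu>2"
  shows "\<exists>\<nu>\<in>SMp X. sm_le X \<mu>0 \<nu> \<and> sm_eq X (T \<nu>) \<nu> \<and> sm_le X \<nu> \<nu>1 \<and> sm_le X \<nu> \<nu>2"
proof -
  define G where "G \<phi> = (\<lambda>\<phi>1. \<nu>1 \<phi>1 + \<nu>2 (\<lambda>x. \<phi> x - \<phi>1 x)) ` C0 X" for \<phi>
  define \<rho> where "\<rho> \<phi> = Inf (G \<phi>)" for \<phi>
  have lowG: "\<mu>0 \<phi> \<le> \<nu>1 \<phi>1 + \<nu>2 (\<lambda>x. \<phi> x - \<phi>1 x)" if p: "\<phi> \<in> C0 X" "\<phi>1 \<in> C0 X" for \<phi> \<phi>1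
  proof -
    have eq: "(\<lambda>x. \<phi>1 x + (\<phi> x - \<phi>1 x)) = \<phi>" by (simp add: fun_eq_iff)
    have "\<mu>0 (\<lambda>x. \<phi>1 x + (\<phi> x - \<phi>1 x)) \<le> \<mu>0 \<phi>1 + \<mu>0 (\<lambda>x. \<phi> x - \<phi>1 x)"
      by (rule SMp_sub[OF \<mu>0 p(2) C0_diff[OF p(1) p(2)]])
    then have "\<mu>0 \<phi> \<le> \<mu>0 \<phi>1 + \<mu>0 (\<lambda>x. \<phi> x - \<phi>1 x)" unfolding eq .
    moreover have "\<mu>0 \<phi>1 \<le> \<nu>1 \<phi>1" using \<nu>1(2) p unfolding sm_le_def by blast
    moreover have "\<mu>0 (\<lambda>x. \<phi> x - \<phi>1 x) \<le> \<nu>2 (\<lambda>x. \<phi> x - \<phi>1 x)"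
      using \<nu>2(2) C0_diff[OF p(1) p(2)] unfolding sm_le_def by blast
    ultimately show ?thesis by linarith
  qed
  have \<rho>_le: "\<rho> \<phi> \<le> \<nu>1 \<phi>1 + \<nu>2 (\<lambda>x. \<phi> x - \<phi>1 x)" if p: "\<phi> \<in> C0 X" "\<phi>1 \<in> C0 X" for \<phi> \<phi>1
    unfolding \<rho>_def
  proof (rule cInf_lower)
    show "\<nu>1 \<phi>1 + \<nu>2 (\<lambda>x. \<phi> x - \<phi>1 x) \<in> G \<phi>" unfolding G_def using p(2) by blast
    show "bdd_below (G \<phi>)" unfolding G_def using lowG[OF p(1)] by (intro bdd_belowI2) blast
  qed
  have \<rho>_ge: "a \<le> \<rho> \<phi>" if "\<And>\<phi>1. \<phi>1 \<in> C0 X \<Longrightarrow> a \<le> \<nu>1 \<phi>1 + \<nu>2 (\<lambda>x. \<phi> x - \<phi>1 x)" for a \<phi>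
    unfolding \<rho>_def
  proof (rule cInf_greatest)
    show "G \<phi> \<noteq> {}" unfolding G_def using C0_zero by blast
    show "\<And>y. y \<in> G \<phi> \<Longrightarrow> a \<le> y" unfolding G_def using that by blast
  qed
  have \<rho>1: "\<rho> \<phi> \<le> \<nu>1 \<phi>" if p: "\<phi> \<in> C0 X" for \<phi>
  proof -
    have eq: "(\<lambda>x. \<phi> x - \<phi> x) = (\<lambda>x. 0)" by simp
    show ?thesis using \<rho>_le[OF p p] unfolding eq SMp_zero[OF \<nu>2(1)] by simp
  qed
  have \<rho>2: "\<rho> \<phi> \<le> \<nu>2 \<phi>" if p: "\<phi> \<in> C0 X" for \<phi>
  proof -
    have eq: "(\<lambda>x. \<phi> x - 0) = \<phi>" by simp
    show ?thesis using \<rho>_le[OF p C0_zero] unfolding eq SMp_zero[OF \<nu>1(1)] by simp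
  qed
  have \<rho>0: "\<mu>0 \<phi> \<le> \<rho> \<phi>" if p: "\<phi> \<in> C0 X" for \<phi>
    by (rule \<rho>_ge) (rule lowG[OF p])
  have \<rho>S: "\<rho> \<in> SMp X"
  proof (rule SMp_intro[where C="\<mu>0 e + \<nu>1 e"])
    fix \<phi> \<phi>' assume p: "\<phi> \<in> C0 X" "\<phi>' \<in> C0 X"
    have key: "\<rho> (\<lambda>x. \<phi> x + \<phi>' x) \<le> (\<nu>1 \<phi>1 + \<nu>2 (\<lambda>x. \<phi> x - \<phi>1 x)) + (\<nu>1 \<phi>1' + \<nu>2 (\<lambda>x. \<phi>' x - \<phi>1' x))"
      if q: "\<phi>1 \<in> C0 X" "\<phi>1' \<in> C0 X" for \<phi>1 \<phi>1'
    proof -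
      have eq: "(\<lambda>x. (\<phi> x + \<phi>' x) - (\<phi>1 x + \<phi>1' x)) = (\<lambda>x. (\<phi> x - \<phi>1 x) + (\<phi>' x - \<phi>1' x))"
        by (simp add: fun_eq_iff)
      have "\<rho> (\<lambda>x. \<phi> x + \<phi>' x) \<le> \<nu>1 (\<lambda>x. \<phi>1 x + \<phi>1' x) + \<nu>2 (\<lambda>x. (\<phi> x + \<phi>' x) - (\<phi>1 x + \<phi>1' x))"
        by (rule \<rho>_le[OF C0_add[OF p] C0_add[OF q]])
      also have "\<dots> = \<nu>1 (\<lambda>x. \<phi>1 x + \<phi>1' x) + \<nu>2 (\<lambda>x. (\<phi> x - \<phi>1 x) + (\<phi>' x - \<phi>1' x))"
        unfolding eq ..
      also have "\<dots> \<le> (\<nu>1 \<phi>1 + \<nu>1 \<phi>1') + (\<nu>2 (\<lambda>x. \<phi> x - \<phi>1 x) + \<nu>2 (\<lambda>x. \<phi>' x - \<phi>1' x))"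
        by (intro add_mono SMp_sub[OF \<nu>1(1) q] SMp_sub[OF \<nu>2(1) C0_diff[OF p(1) q(1)] C0_diff[OF p(2) q(2)]])
      finally show ?thesis by simp
    qed
    have "\<rho> (\<lambda>x. \<phi> x + \<phi>' x) - (\<nu>1 \<phi>1' + \<nu>2 (\<lambda>x. \<phi>' x - \<phi>1' x)) \<le> \<rho> \<phi>" if q: "\<phi>1' \<in> C0 X" for \<phi>1'
      by (rule \<rho>_ge) (use key q in \<open>simp add: algebra_simps\<close>)
    then have "\<rho> (\<lambda>x. \<phi> x + \<phi>' x) - \<rho> \<phi> \<le> \<rho> \<phi>'"
      by (intro \<rho>_ge) (simp add: algebra_simps)
    then show "\<rho> (\<lambda>x. \<phi> x + \<phi>' x) \<le> \<rho> \<phi> + \<rho> \<phi>'" by simp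
  next
    fix \<phi> and c :: real assume p: "\<phi> \<in> C0 X" and c: "c > 0"
    have pc: "(\<lambda>x. c * \<phi> x) \<in> C0 X" using p by (rule C0_mult)
    have "\<rho> (\<lambda>x. c * \<phi> x) / c \<le> \<nu>1 \<phi>1 + \<nu>2 (\<lambda>x. \<phi> x - \<phi>1 x)" if q: "\<phi>1 \<in> C0 X" for \<phi>1
    proof -
      have eq: "(\<lambda>x. c * \<phi> x - c * \<phi>1 x) = (\<lambda>x. c * (\<phi> x - \<phi>1 x))" by (simp add: fun_eq_iff algebra_simps)
      have "\<rho> (\<lambda>x. c * \<phi> x) \<le> \<nu>1 (\<lambda>x. c * \<phi>1 x) + \<nu>2 (\<lambda>x. c * \<phi> x - c * \<phi>1 x)"
        by (rule \<rho>_le[OF pc C0_mult[OF q]])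
      also have "\<dots> = c * (\<nu>1 \<phi>1 + \<nu>2 (\<lambda>x. \<phi> x - \<phi>1 x))"
        unfolding eq using c SMp_hom[OF \<nu>1(1) q, of c] SMp_hom[OF \<nu>2(1) C0_diff[OF p q], of c]
        by (simp add: algebra_simps)
      finally show ?thesis using c by (simp add: field_simps)
    qed
    then have "\<rho> (\<lambda>x. c * \<phi> x) / c \<le> \<rho> \<phi>" by (intro \<rho>_ge)
    then have A: "\<rho> (\<lambda>x. c * \<phi> x) \<le> c * \<rho> \<phi>" using c by (simp add: field_simps)
    have "c * \<rho> \<phi> \<le> \<nu>1 \<phi>1 + \<nu>2 (\<lambda>x. c * \<phi> x - \<phi>1 x)" if q: "\<phi>1 \<in> C0 X" for \<phi>1
    proof -
      have q': "(\<lambda>x. (1/c) * \<phi>1 x) \<in> C0 X" using q by (rule C0_mult)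
      have eq: "(\<lambda>x. c * (\<phi> x - (1/c) * \<phi>1 x)) = (\<lambda>x. c * \<phi> x - \<phi>1 x)"
        using c by (simp add: fun_eq_iff algebra_simps)
      have eq2: "(\<lambda>x. c * ((1/c) * \<phi>1 x)) = \<phi>1" using c by (simp add: fun_eq_iff)
      have "c * \<rho> \<phi> \<le> c * (\<nu>1 (\<lambda>x. (1/c) * \<phi>1 x) + \<nu>2 (\<lambda>x. \<phi> x - (1/c) * \<phi>1 x))"
        using \<rho>_le[OF p q'] c by simp
      also have "\<dots> = \<nu>1 (\<lambda>x. c * ((1/c) * \<phi>1 x)) + \<nu>2 (\<lambda>x. c * (\<phi> x - (1/c) * \<phi>1 x))"
        using c SMp_hom[OF \<nu>1(1) q', of c] SMp_hom[OF \<nu>2(1) C0_diff[OF p q'], of c]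
        by (simp add: algebra_simps)
      also have "\<dots> = \<nu>1 \<phi>1 + \<nu>2 (\<lambda>x. c * \<phi> x - \<phi>1 x)" unfolding eq eq2 ..
      finally show ?thesis .
    qed
    then have B: "c * \<rho> \<phi> \<le> \<rho> (\<lambda>x. c * \<phi> x)" by (intro \<rho>_ge)
    from A B show "\<rho> (\<lambda>x. c * \<phi> x) = c * \<rho> \<phi>" by simp
  next
    show "\<rho> (\<lambda>x. 0) = 0"
      using \<rho>1[OF C0_zero] \<rho>0[OF C0_zero] SMp_zero[OF \<nu>1(1)] SMp_zero[OF \<mu>0] by simp
  next
    fix \<phi> assume p: "\<phi> \<in> C0 X"
    have a: "\<bar>\<mu>0 \<phi>\<bar> \<le> \<mu>0 e * supnorm X \<phi>" by (rule SMp_abs[OF \<mu>0 p])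
    have b: "\<bar>\<nu>1 \<phi>\<bar> \<le> \<nu>1 e * supnorm X \<phi>" by (rule SMp_abs[OF \<nu>1(1) p])
    have c: "0 \<le> \<mu>0 e * supnorm X \<phi>" "0 \<le> \<nu>1 e * supnorm X \<phi>"
      using SMp_e[OF \<mu>0] SMp_e[OF \<nu>1(1)] supnorm_nonneg[OF p] by auto
    show "\<bar>\<rho> \<phi>\<bar> \<le> (\<mu>0 e + \<nu>1 e) * supnorm X \<phi>"
      using a b c \<rho>0[OF p] \<rho>1[OF p] by (simp add: abs_le_iff algebra_simps)
  next
    fix \<phi> \<phi>' assume p: "\<phi> \<in> C0 X" "\<phi>' \<in> C0 X" and le: "\<forall>x\<in>X. \<phi> x \<le> \<phi>' x"
    show "\<rho> \<phi> \<le> \<rho> \<phi>'"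
    proof (rule \<rho>_ge)
      fix \<phi>1 assume q: "\<phi>1 \<in> C0 X"
      have "\<rho> \<phi> \<le> \<nu>1 \<phi>1 + \<nu>2 (\<lambda>x. \<phi> x - \<phi>1 x)" by (rule \<rho>_le[OF p(1) q])
      also have "\<nu>2 (\<lambda>x. \<phi> x - \<phi>1 x) \<le> \<nu>2 (\<lambda>x. \<phi>' x - \<phi>1 x)"
        by (rule SMp_mono[OF \<nu>2(1) C0_diff[OF p(1) q] C0_diff[OF p(2) q]]) (use le in simp)
      finally show "\<rho> \<phi> \<le> \<nu>1 \<phi>1 + \<nu>2 (\<lambda>x. \<phi>' x - \<phi>1 x)" by simp
    qed
  qed
  have \<rho>dec: "sm_le X (T \<rho>) \<rho>" unfolding sm_le_def
  proof
    fix \<phi> assume p: "\<phi> \<in> C0 X"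
    show "T \<rho> \<phi> \<le> \<rho> \<phi>"
    proof (rule \<rho>_ge)
      fix \<phi>1 assume q: "\<phi>1 \<in> C0 X"
      have eq: "(\<lambda>x. \<phi>1 x + (\<phi> x - \<phi>1 x)) = \<phi>" by (simp add: fun_eq_iff)
      have "T \<rho> \<phi> \<le> T \<rho> \<phi>1 + T \<rho> (\<lambda>x. \<phi> x - \<phi>1 x)"
        using T_sub[OF \<rho>S q C0_diff[OF p q]] unfolding eq .
      also have "\<dots> \<le> T \<nu>1 \<phi>1 + T \<nu>2 (\<lambda>x. \<phi> x - \<phi>1 x)"
        by (intro add_mono T_mono[OF \<rho>S _ q] T_mono[OF \<rho>S _ C0_diff[OF p q]]) (use \<rho>1 \<rho>2 in blast)+
      also have "\<dots> = \<nu>1 \<phi>1 + \<nu>2 (\<lambda>x. \<phi> x - \<phi>1 x)"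
        using \<nu>1(3) \<nu>2(3) q C0_diff[OF p q] unfolding sm_eq_def by simp
      finally show "T \<rho> \<phi> \<le> \<nu>1 \<phi>1 + \<nu>2 (\<lambda>x. \<phi> x - \<phi>1 x)" .
    qed
  qed
  obtain \<mu> where \<mu>: "\<mu> \<in> SMp X" "sm_le X \<mu> \<rho>" "sm_eq X (T \<mu>) \<mu>"
    "\<And>\<nu>. \<nu> \<in> SMp X \<Longrightarrow> sm_le X \<nu> (T \<nu>) \<Longrightarrow> sm_le X \<nu> \<rho> \<Longrightarrow> sm_le X \<nu> \<mu>"
    using decr[OF \<rho>S \<rho>dec] by blast
  have "sm_le X \<mu>0 \<mu>" using \<mu>(4)[OF \<mu>0 inc] \<rho>0 unfolding sm_le_def by blast
  moreover have "sm_le X \<mu> \<nu>1" "sm_le X \<mu> \<nu>2" using \<mu>(2) \<rho>1 \<rho>2 unfolding sm_le_def by (blast intro: order_trans)+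
  ultimately show ?thesis using \<mu>(1,3) by blast
qed

lemma part3:
  assumes \<mu>0: "\<mu>0 \<in> SMp X" and inc: "sm_le X \<mu>0 (T \<mu>0)"
  shows "\<exists>\<mu>\<in>SMp X. sm_le X \<mu>0 \<mu> \<and> sm_eq X (T \<mu>) \<mu>
           \<and> (\<forall>\<nu>\<in>SMp X. sm_le X \<mu>0 \<nu> \<and> sm_eq X (T \<nu>) \<nu> \<longrightarrow> sm_le X \<mu> \<nu>)"
proof -
  define F where "F = {\<nu>\<in>SMp X. sm_le X \<mu>0 \<nu> \<and> sm_eq X (T \<nu>) \<nu>}"
  define tp where "tp = (\<lambda>\<phi>. \<mu>0 e * max 0 (Sup (\<phi> ` X)))"
  have tp: "tp \<in> SMp X" "sm_le X \<mu>0 tp" "sm_le X (T tp) tp"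
    using top_SMp[OF \<mu>0] unfolding tp_def by auto
  obtain \<nu>T where \<nu>T: "\<nu>T \<in> SMp X" "sm_eq X (T \<nu>T) \<nu>T"
    "\<And>\<nu>. \<nu> \<in> SMp X \<Longrightarrow> sm_le X \<nu> (T \<nu>) \<Longrightarrow> sm_le X \<nu> tp \<Longrightarrow> sm_le X \<nu> \<nu>T"
    using decr[OF tp(1) tp(3)] by blast
  have \<nu>TF: "\<nu>T \<in> F" unfolding F_def using \<nu>T(1,2) \<nu>T(3)[OF \<mu>0 inc tp(2)] by blast
  define m where "m \<phi> = Inf ((\<lambda>\<nu>. \<nu> \<phi>) ` F)" for \<phi>
  have Fle: "\<mu>0 \<phi> \<le> \<nu> \<phi>" if "\<nu> \<in> F" "\<phi> \<in> C0 X" for \<nu> \<phi>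
    using that unfolding F_def sm_le_def by blast
  have FS: "\<nu> \<in> SMp X" if "\<nu> \<in> F" for \<nu> using that unfolding F_def by blast
  have Ffix: "T \<nu> \<phi> = \<nu> \<phi>" if "\<nu> \<in> F" "\<phi> \<in> C0 X" for \<nu> \<phi>
    using that unfolding F_def sm_eq_def by blast
  have m_le: "m \<phi> \<le> \<nu> \<phi>" if "\<nu> \<in> F" "\<phi> \<in> C0 X" for \<nu> \<phi>
    unfolding m_def
  proof (rule cInf_lower)
    show "\<nu> \<phi> \<in> (\<lambda>\<nu>. \<nu> \<phi>) ` F" using that by blast
    show "bdd_below ((\<lambda>\<nu>. \<nu> \<phi>) ` F)" using Fle[OF _ that(2)] by (intro bdd_belowI2) blast
  qed
  have m_ge: "a \<le> m \<phi>" if "\<And>\<nu>. \<nu> \<in> F \<Longrightarrow> a \<le> \<nu> \<phi>" for a \<phi>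
    unfolding m_def using \<nu>TF that by (intro cInf_greatest) auto
  have m0: "\<mu>0 \<phi> \<le> m \<phi>" if "\<phi> \<in> C0 X" for \<phi> using Fle[OF _ that] by (intro m_ge)
  have dir: "\<exists>\<nu>\<in>F. (\<forall>\<phi>\<in>C0 X. \<nu> \<phi> \<le> \<nu>1 \<phi> \<and> \<nu> \<phi> \<le> \<nu>2 \<phi>)" if "\<nu>1 \<in> F" "\<nu>2 \<in> F" for \<nu>1 \<nu>2
  proof -
    have "\<nu>1 \<in> SMp X" "sm_le X \<mu>0 \<nu>1" "sm_eq X (T \<nu>1) \<nu>1"
         "\<nu>2 \<in> SMp X" "sm_le X \<mu>0 \<nu>2" "sm_eq X (T \<nu>2) \<nu>2" using that unfolding F_def by auto
    from directed[OF \<mu>0 inc this] show ?thesis unfolding F_def sm_le_def by blast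
  qed
  have mS: "m \<in> SMp X"
  proof (rule SMp_intro[where C="\<mu>0 e + \<nu>T e"])
    fix \<phi> \<phi>' assume p: "\<phi> \<in> C0 X" "\<phi>' \<in> C0 X"
    have key: "m (\<lambda>x. \<phi> x + \<phi>' x) \<le> \<nu>1 \<phi> + \<nu>2 \<phi>'" if q: "\<nu>1 \<in> F" "\<nu>2 \<in> F" for \<nu>1 \<nu>2
    proof -
      obtain \<nu> where \<nu>: "\<nu> \<in> F" "\<forall>\<phi>\<in>C0 X. \<nu> \<phi> \<le> \<nu>1 \<phi> \<and> \<nu> \<phi> \<le> \<nu>2 \<phi>" using dir[OF q] by blast
      have "m (\<lambda>x. \<phi> x + \<phi>' x) \<le> \<nu> (\<lambda>x. \<phi> x + \<phi>' x)" by (rule m_le[OF \<nu>(1) C0_add[OF p]])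
      also have "\<dots> \<le> \<nu> \<phi> + \<nu> \<phi>'" by (rule SMp_sub[OF FS[OF \<nu>(1)] p])
      also have "\<dots> \<le> \<nu>1 \<phi> + \<nu>2 \<phi>'" using \<nu>(2) p by (intro add_mono) blast+
      finally show ?thesis .
    qed
    have "m (\<lambda>x. \<phi> x + \<phi>' x) - \<nu>2 \<phi>' \<le> m \<phi>" if "\<nu>2 \<in> F" for \<nu>2
      by (rule m_ge) (use key that in \<open>simp add: algebra_simps\<close>)
    then have "m (\<lambda>x. \<phi> x + \<phi>' x) - m \<phi> \<le> m \<phi>'" by (intro m_ge) (simp add: algebra_simps)
    then show "m (\<lambda>x. \<phi> x + \<phi>' x) \<le> m \<phi> + m \<phi>'" by simp
  next
    fix \<phi> and c :: real assume p: "\<phi> \<in> C0 X" and c: "c > 0"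
    have "m (\<lambda>x. c * \<phi> x) / c \<le> \<nu> \<phi>" if q: "\<nu> \<in> F" for \<nu>
    proof -
      have "m (\<lambda>x. c * \<phi> x) \<le> \<nu> (\<lambda>x. c * \<phi> x)" by (rule m_le[OF q C0_mult[OF p]])
      also have "\<dots> = c * \<nu> \<phi>" using c by (intro SMp_hom[OF FS[OF q] p]) simp
      finally show ?thesis using c by (simp add: field_simps)
    qed
    then have "m (\<lambda>x. c * \<phi> x) / c \<le> m \<phi>" by (intro m_ge)
    then have A: "m (\<lambda>x. c * \<phi> x) \<le> c * m \<phi>" using c by (simp add: field_simps)
    have "c * m \<phi> \<le> \<nu> (\<lambda>x. c * \<phi> x)" if q: "\<nu> \<in> F" for \<nu>
    proof -
      have "c * m \<phi> \<le> c * \<nu> \<phi>" using m_le[OF q p] c by simp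
      also have "\<dots> = \<nu> (\<lambda>x. c * \<phi> x)" using c by (intro SMp_hom[OF FS[OF q] p, symmetric]) simp
      finally show ?thesis .
    qed
    then have B: "c * m \<phi> \<le> m (\<lambda>x. c * \<phi> x)" by (intro m_ge)
    from A B show "m (\<lambda>x. c * \<phi> x) = c * m \<phi>" by simp
  next
    show "m (\<lambda>x. 0) = 0"
      using m_le[OF \<nu>TF C0_zero] m0[OF C0_zero] SMp_zero[OF \<nu>T(1)] SMp_zero[OF \<mu>0] by simp
  next
    fix \<phi> assume p: "\<phi> \<in> C0 X"
    have a: "\<bar>\<mu>0 \<phi>\<bar> \<le> \<mu>0 e * supnorm X \<phi>" by (rule SMp_abs[OF \<mu>0 p])
    have b: "\<bar>\<nu>T \<phi>\<bar> \<le> \<nu>T e * supnorm X \<phi>" by (rule SMp_abs[OF \<nu>T(1) p])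
    have c: "0 \<le> \<mu>0 e * supnorm X \<phi>" "0 \<le> \<nu>T e * supnorm X \<phi>"
      using SMp_e[OF \<mu>0] SMp_e[OF \<nu>T(1)] supnorm_nonneg[OF p] by auto
    show "\<bar>m \<phi>\<bar> \<le> (\<mu>0 e + \<nu>T e) * supnorm X \<phi>"
      using a b c m0[OF p] m_le[OF \<nu>TF p] by (simp add: abs_le_iff algebra_simps)
  next
    fix \<phi> \<phi>' assume p: "\<phi> \<in> C0 X" "\<phi>' \<in> C0 X" and le: "\<forall>x\<in>X. \<phi> x \<le> \<phi>' x"
    show "m \<phi> \<le> m \<phi>'"
    proof (rule m_ge)
      fix \<nu> assume q: "\<nu> \<in> F"
      have "m \<phi> \<le> \<nu> \<phi>" by (rule m_le[OF q p(1)])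
      also have "\<dots> \<le> \<nu> \<phi>'" by (rule SMp_mono[OF FS[OF q] p]) (use le in blast)
      finally show "m \<phi> \<le> \<nu> \<phi>'" .
    qed
  qed
  have fix1: "T m \<phi> \<le> m \<phi>" if p: "\<phi> \<in> C0 X" for \<phi>
  proof (rule m_ge)
    fix \<nu> assume q: "\<nu> \<in> F"
    have "T m \<phi> \<le> T \<nu> \<phi>" by (rule T_mono[OF mS _ p]) (use m_le[OF q] in blast)
    then show "T m \<phi> \<le> \<nu> \<phi>" using Ffix[OF q p] by simp
  qed
  have fix2: "m \<phi> \<le> T m \<phi>" if p: "\<phi> \<in> C0 X" for \<phi>
  proof (rule T_ge[OF p])
    fix \<psi> assume q: "\<psi> \<in> S \<phi>"
    show "m \<phi> \<le> m \<psi>"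
    proof (rule m_ge)
      fix \<nu> assume r: "\<nu> \<in> F"
      have "m \<phi> \<le> \<nu> \<phi>" by (rule m_le[OF r p])
      also have "\<dots> = T \<nu> \<phi>" using Ffix[OF r p] by simp
      also have "\<dots> \<le> \<nu> \<psi>" by (rule T_le[OF FS[OF r] p q])
      finally show "m \<phi> \<le> \<nu> \<psi>" .
    qed
  qed
  have "sm_le X \<mu>0 m" unfolding sm_le_def using m0 by blast
  moreover have "sm_eq X (T m) m" unfolding sm_eq_def using fix1 fix2 by (simp add: antisym)
  moreover have "\<forall>\<nu>\<in>SMp X. sm_le X \<mu>0 \<nu> \<and> sm_eq X (T \<nu>) \<nu> \<longrightarrow> sm_le X m \<nu>"
    unfolding sm_le_def using m_le unfolding F_def sm_le_def by blast
  ultimately show ?thesis using mS by blast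
qed

end

theorem theorem1p4:
  fixes X U :: "'a::metric_space set" and f :: "'a \<Rightarrow> 'a"
    and \<mu>0 :: "('a \<Rightarrow> real) \<Rightarrow> real"
  assumes "compact X"
    and "open_dense_map X U f"
    and "\<mu>0 \<in> SMp X"
    and "\<exists>\<phi>\<in>C0 X. \<mu>0 \<phi> \<noteq> 0"
  shows
    "(\<forall>\<mu>. weak_cluster_point X
            (\<lambda>n \<phi>. (1 / real n) * (\<Sum>j=0..n. ((pushforward X U f ^^ j) \<mu>0) \<phi>)) \<mu>
          \<longrightarrow> sm_le X \<mu> (pushforward X U f \<mu>))
   \<and> (sm_le X (pushforward X U f \<mu>0) \<mu>0 \<longrightarrow>
        (\<exists>\<mu>inf\<in>SMp X. weak_conv X (\<lambda>n. (pushforward X U f ^^ n) \<mu>0) \<mu>inf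
           \<and> sm_le X \<mu>inf \<mu>0 \<and> sm_eq X (pushforward X U f \<mu>inf) \<mu>inf
           \<and> (\<forall>\<mu>\<in>SMp X. sm_le X \<mu> \<mu>0 \<and> sm_eq X (pushforward X U f \<mu>) \<mu>
                 \<longrightarrow> sm_le X \<mu> \<mu>inf)))
   \<and> (sm_le X \<mu>0 (pushforward X U f \<mu>0) \<longrightarrow>
        (\<exists>\<mu>\<in>SMp X. sm_le X \<mu>0 \<mu> \<and> sm_eq X (pushforward X U f \<mu>) \<mu>
           \<and> (\<forall>\<nu>\<in>SMp X. sm_le X \<mu>0 \<nu> \<and> sm_eq X (pushforward X U f \<nu>) \<nu>
                 \<longrightarrow> sm_le X \<mu> \<nu>)))"
proof -
  have ne: "X \<noteq> {}"
  proof
    assume X: "X = {}"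
    obtain \<phi> where p: "\<phi> \<in> C0 X" "\<mu>0 \<phi> \<noteq> 0" using assms(4) by blast
    have "\<phi> = (\<lambda>x. 0)" using p(1) X unfolding C0_def by auto
    then show False using p(2) SMp_zero[OF assms(3)] by simp
  qed
  interpret setting X U f using assms(1,2) ne by unfold_locales
  have P1: "\<forall>\<mu>. weak_cluster_point X
            (\<lambda>n \<phi>. (1 / real n) * (\<Sum>j=0..n. ((pushforward X U f ^^ j) \<mu>0) \<phi>)) \<mu>
          \<longrightarrow> sm_le X \<mu> (pushforward X U f \<mu>)"
    using part1[OF assms(3)] by blast
  have P2: "sm_le X (pushforward X U f \<mu>0) \<mu>0 \<longrightarrow>
        (\<exists>\<mu>inf\<in>SMp X. weak_conv X (\<lambda>n. (pushforward X U f ^^ n) \<mu>0) \<mu>inf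
           \<and> sm_le X \<mu>inf \<mu>0 \<and> sm_eq X (pushforward X U f \<mu>inf) \<mu>inf
           \<and> (\<forall>\<mu>\<in>SMp X. sm_le X \<mu> \<mu>0 \<and> sm_eq X (pushforward X U f \<mu>) \<mu>
                 \<longrightarrow> sm_le X \<mu> \<mu>inf))"
  proof
    assume dec: "sm_le X (pushforward X U f \<mu>0) \<mu>0"
    obtain \<mu>inf where m: "\<mu>inf \<in> SMp X" "weak_conv X (\<lambda>n. (T ^^ n) \<mu>0) \<mu>inf"
      "sm_le X \<mu>inf \<mu>0" "sm_eq X (T \<mu>inf) \<mu>inf"
      "\<forall>\<nu>\<in>SMp X. sm_le X \<nu> (T \<nu>) \<and> sm_le X \<nu> \<mu>0 \<longrightarrow> sm_le X \<nu> \<mu>inf"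
      using decr[OF assms(3) dec] by blast
    have "\<forall>\<mu>\<in>SMp X. sm_le X \<mu> \<mu>0 \<and> sm_eq X (T \<mu>) \<mu> \<longrightarrow> sm_le X \<mu> \<mu>inf"
      using m(5) unfolding sm_eq_def sm_le_def by (metis order_refl)
    then show "\<exists>\<mu>inf\<in>SMp X. weak_conv X (\<lambda>n. (pushforward X U f ^^ n) \<mu>0) \<mu>inf
           \<and> sm_le X \<mu>inf \<mu>0 \<and> sm_eq X (pushforward X U f \<mu>inf) \<mu>inf
           \<and> (\<forall>\<mu>\<in>SMp X. sm_le X \<mu> \<mu>0 \<and> sm_eq X (pushforward X U f \<mu>) \<mu>
                 \<longrightarrow> sm_le X \<mu> \<mu>inf)" using m(1-4) by blast
  qed
  have P3: "sm_le X \<mu>0 (pushforward X U f \<mu>0) \<longrightarrow>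
        (\<exists>\<mu>\<in>SMp X. sm_le X \<mu>0 \<mu> \<and> sm_eq X (pushforward X U f \<mu>) \<mu>
           \<and> (\<forall>\<nu>\<in>SMp X. sm_le X \<mu>0 \<nu> \<and> sm_eq X (pushforward X U f \<nu>) \<nu>
                 \<longrightarrow> sm_le X \<mu> \<nu>))"
    using part3[OF assms(3)] by blast
  show ?thesis using P1 P2 P3 by blast
qed

end
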